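(* Consider the utility-minus-cost problem $$\max_{\boldsymbol{r},\boldsymbol{\phi}}\ \sum_{i\in\mathcal{V}}\sum_{a\in\mathcal{A}}U_{ia}(r_i(a))-\sum_{(i,j)\in\mathcal{E}}D_{ij}(F_{ij})-\sum_{i\in\mathcal{V}}C_i(G_i)\quad\text{s.t. } 0\le r_i(a)\le\bar r_i(a),\ \boldsymbol{r}\in\mathcal{D}_{\boldsymbol{r}},\ \boldsymbol{\phi}\in\mathcal{D}_{\boldsymbol{\phi}}(\boldsymbol{r}),$$ reparametrized by admission fractions $\phi_{i^Vi}(a),\phi_{i^Vd_a}(a)\ge0$ with $\phi_{i^Vi}(a)+\phi_{i^Vd_a}(a)=1$ and $r_i(a)=\phi_{i^Vi}(a)\,\bar r_i(a)$. Let $(\boldsymbol{r},\boldsymbol{\phi})$ with admission fractions be feasible. If $\boldsymbol{\phi}$ satisfies condition (SC) (for input $\boldsymbol{r}$), and for all $i\in\mathcal{V}$ and $a\in\mathcal{A}$, $$\frac{\partial T}{\partial t_i(a,0)}\le U'_{ia}(r_i(a))\ \text{ if }\phi_{i^Vi}(a)>0,\qquad \frac{\partial T}{\partial t_i(a,0)}\ge U'_{ia}(r_i(a))\ \text{ if }\phi_{i^Vd_a}(a)>0,$$ then $(\boldsymbol{r},\boldsymbol{\phi})$ is a global optimal solution of the utility-minus-cost problem.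
   Context: Service-chain computing network model. $\mathcal{G}=(\mathcal{V},\mathcal{E})$ is a directed, strongly connected graph whose links are bidirectional ($(i,j)\in\mathcal{E}\Rightarrow(j,i)\in\mathcal{E}$). $\mathcal{A}$ is a finite set of applications; application $a$ has a destination $d_a\in\mathcal{V}$ and a chain of $|\mathcal{T}_a|$ tasks performed in order. The set of stages is $\mathcal{S}=\{(a,k): a\in\mathcal{A}, k=0,1,\dots,|\mathcal{T}_a|\}$; stage $(a,k)$ denotes packets that have completed the first $k$ tasks of $a$, and has packet size $L_{(a,k)}>0$. Exogenous input rates are $r_i(a)\ge 0$ (stage $(a,0)$ packets injected at node $i$), $\boldsymbol{r}=[r_i(a)]$. The forwarding strategy $\boldsymbol{\phi}=[\phi_{ij}(a,k)]_{(a,k)\in\mathcal{S},i\in\mathcal{V},j\in\{0\}\cup\mathcal{V}}$ has $\phi_{ij}(a,k)\in[0,1]$; for $j\in\mathcal{V}$ it is the fraction of node $i$'s stage-$(a,k)$ traffic sent to node $j$ (with $\phi_{ij}(a,k)=0$ if $(i,j)\notin\mathcal{E}$), and $\phi_{i0}(a,k)$ is the fraction sent to $i$'s local processor, which converts each stage-$(a,k)$ packet into one stage-$(a,k+1)$ packet; $\phi_{i0}(a,|\mathcal{T}_a|)=0$. Flow conservation: $\sum_{j\in\{0\}\cup\mathcal{V}}\phi_{ij}(a,k)=0$ if $k=|\mathcal{T}_a|$ and $i=d_a$, and $=1$ otherwise. Traffic $t_i(a,k)$ satisfies $t_i(a,0)=\sum_{j\in\mathcal{V}}t_j(a,0)\phi_{ji}(a,0)+r_i(a)$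 and, for $k\ge1$, $t_i(a,k)=\sum_{j\in\mathcal{V}}t_j(a,k)\phi_{ji}(a,k)+t_i(a,k-1)\phi_{i0}(a,k-1)$. Link flows $f_{ij}(a,k)=t_i(a,k)\phi_{ij}(a,k)$, processor inputs $g_i(a,k)=t_i(a,k)\phi_{i0}(a,k)$, total link flow $F_{ij}=\sum_{(a,k)\in\mathcal{S}}L_{(a,k)}f_{ij}(a,k)$, computation workload $G_i=\sum_{(a,k)\in\mathcal{S}}w_i(a,k)g_i(a,k)$ with weights $w_i(a,k)>0$. Link costs $D_{ij}(\cdot)$ and computation costs $C_i(\cdot)$ are increasing, continuously differentiable, convex functions (possibly taking value $+\infty$ outside a domain). Total cost $T(\boldsymbol{\phi})=\sum_{(i,j)\in\mathcal{E}}D_{ij}(F_{ij})+\sum_{i\in\mathcal{V}}C_i(G_i)$. The feasible set $\mathcal{D}_{\boldsymbol{\phi}}(\boldsymbol{r})$ consists of $\boldsymbol{\phi}$ satisfying flow conservation with all $D_{ij}(F_{ij})<\infty$ and $C_i(G_i)<\infty$; $\mathcal{D}_{\boldsymbol{r}}=\{\boldsymbol{r}\ge0:\mathcal{D}_{\boldsymbol{\phi}}(\boldsymbol{r})\neq\emptyset\}$. Marginal quantities: $\partial T/\partial t_i(a,k)$ is the marginal total cost of an additional exogenous injection of stage-$(a,k)$ traffic at node $i$ (with $\boldsymbol{\phi}$ fixed); it satisfies $\partial T/\partial t_{d_a}(a,|\mathcal{T}_a|)=0$, for $k=|\mathcal{T}_a|$: $\frac{\partial T}{\partial t_i(a,k)}=\sum_{j\in\mathcal{V}}\phi_{ij}(a,k)\big(L_{(a,k)}D'_{ij}(F_{ij})+\frac{\partial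 T}{\partial t_j(a,k)}\big)$, and for $k<|\mathcal{T}_a|$: $\frac{\partial T}{\partial t_i(a,k)}=\phi_{i0}(a,k)\big(w_i(a,k)C'_i(G_i)+\frac{\partial T}{\partial t_i(a,k+1)}\big)+\sum_{j\in\mathcal{V}}\phi_{ij}(a,k)\big(L_{(a,k)}D'_{ij}(F_{ij})+\frac{\partial T}{\partial t_j(a,k)}\big)$. Modified marginals: $\delta_{ij}(a,k)=L_{(a,k)}D'_{ij}(F_{ij})+\frac{\partial T}{\partial t_j(a,k)}$ for $j\in\mathcal{V}$ with $(i,j)\in\mathcal{E}$, $\delta_{i0}(a,k)=w_i(a,k)C'_i(G_i)+\frac{\partial T}{\partial t_i(a,k+1)}$ for $k<|\mathcal{T}_a|$, and $\delta_{ij}(a,k)=\infty$ for $(i,j)\notin\mathcal{E}$ and $\delta_{i0}(a,|\mathcal{T}_a|)=\infty$. Condition (SC): for all $i\in\mathcal{V}$, $j\in\{0\}\cup\mathcal{V}$, $(a,k)\in\mathcal{S}$, $\delta_{ij}(a,k)=\min_{j'\in\{0\}\cup\mathcal{V}}\delta_{ij'}(a,k)$ if $\phi_{ij}(a,k)>0$ and $\delta_{ij}(a,k)\ge\min_{j'}\delta_{ij'}(a,k)$ if $\phi_{ij}(a,k)=0$. Congestion control: each pair $(i,a)$ has a user-specified upper limit $\bar r_i(a)\ge0$ on the admitted rate and a utility function $U_{ia}:[0,\bar r_i(a)]\to\mathbb{R}$ that is increasing, concave, continuously differentiable, with $U_{ia}(0)=0$. A virtual gateway node $i^V$ receives rate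 $\bar r_i(a)$; the fraction $\phi_{i^Vi}(a)$ is admitted to physical node $i$ (so $r_i(a)=\phi_{i^Vi}(a)\bar r_i(a)$), the fraction $\phi_{i^Vd_a}(a)$ is rejected, incurring cost $U_{ia}(\bar r_i(a))-U_{ia}(r_i(a))$. *)

theory Defs
  imports "HOL-Analysis.Analysis"
begin

text \<open>Applications: a finite set A (elements of type 'a); d a is the destination,
  K a = |T_a| the number of tasks; the stages are (a,k) with a in A, k \<le> K a.
  Forwarding strategy: phi i (Some j) a k = phi_ij(a,k) (fraction to neighbour j),
  phi i None a k = phi_i0(a,k) (fraction to the local processor).
  Packet sizes L a k = L_(a,k); computation weights w i a k = w_i(a,k).\<close>

definition graph_ok :: "'v set \<Rightarrow> ('v \<times> 'v) set \<Rightarrow> bool" where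
  "graph_ok V E \<longleftrightarrow> finite V \<and> E \<subseteq> V \<times> V
     \<and> (\<forall>i j. (i, j) \<in> E \<longrightarrow> (j, i) \<in> E)
     \<and> (\<forall>i\<in>V. \<forall>j\<in>V. (i, j) \<in> E\<^sup>*)"

definition flow_cons ::
  "'v set \<Rightarrow> ('v \<times> 'v) set \<Rightarrow> 'a set \<Rightarrow> ('a \<Rightarrow> 'v) \<Rightarrow> ('a \<Rightarrow> nat)
   \<Rightarrow> ('v \<Rightarrow> 'v option \<Rightarrow> 'a \<Rightarrow> nat \<Rightarrow> real) \<Rightarrow> bool" where
  "flow_cons V E A d K phi \<longleftrightarrow>
     (\<forall>a\<in>A. \<forall>k\<le>K a. \<forall>i\<in>V.
        (\<forall>j\<in>V. 0 \<le> phi i (Some j) a k \<and> phi i (Some j) a k \<le> 1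
                \<and> ((i, j) \<notin> E \<longrightarrow> phi i (Some j) a k = 0))
      \<and> 0 \<le> phi i None a k \<and> phi i None a k \<le> 1
      \<and> (k = K a \<longrightarrow> phi i None a k = 0)
      \<and> phi i None a k + (\<Sum>j\<in>V. phi i (Some j) a k)
          = (if k = K a \<and> i = d a then 0 else 1))"

definition traffic ::
  "'v set \<Rightarrow> 'a set \<Rightarrow> ('a \<Rightarrow> nat) \<Rightarrow> ('v \<Rightarrow> 'v option \<Rightarrow> 'a \<Rightarrow> nat \<Rightarrow> real)
   \<Rightarrow> ('v \<Rightarrow> 'a \<Rightarrow> real) \<Rightarrow> ('v \<Rightarrow> 'a \<Rightarrow> nat \<Rightarrow> real) \<Rightarrow> bool" where
  "traffic V A K phi r t \<longleftrightarrow>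
     (\<forall>a\<in>A. \<forall>i\<in>V.
        (\<forall>k\<le>K a. 0 \<le> t i a k)
      \<and> t i a 0 = (\<Sum>j\<in>V. t j a 0 * phi j (Some i) a 0) + r i a
      \<and> (\<forall>k. 1 \<le> k \<and> k \<le> K a \<longrightarrow>
            t i a k = (\<Sum>j\<in>V. t j a k * phi j (Some i) a k)
                      + t i a (k - 1) * phi i None a (k - 1)))"

definition link_flow ::
  "'a set \<Rightarrow> ('a \<Rightarrow> nat) \<Rightarrow> ('a \<Rightarrow> nat \<Rightarrow> real)
   \<Rightarrow> ('v \<Rightarrow> 'v option \<Rightarrow> 'a \<Rightarrow> nat \<Rightarrow> real) \<Rightarrow> ('v \<Rightarrow> 'a \<Rightarrow> nat \<Rightarrow> real)
   \<Rightarrow> 'v \<Rightarrow> 'v \<Rightarrow> real" where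
  "link_flow A K L phi t i j = (\<Sum>a\<in>A. \<Sum>k\<le>K a. L a k * (t i a k * phi i (Some j) a k))"

definition comp_load ::
  "'a set \<Rightarrow> ('a \<Rightarrow> nat) \<Rightarrow> ('v \<Rightarrow> 'a \<Rightarrow> nat \<Rightarrow> real)
   \<Rightarrow> ('v \<Rightarrow> 'v option \<Rightarrow> 'a \<Rightarrow> nat \<Rightarrow> real) \<Rightarrow> ('v \<Rightarrow> 'a \<Rightarrow> nat \<Rightarrow> real)
   \<Rightarrow> 'v \<Rightarrow> real" where
  "comp_load A K w phi t i = (\<Sum>a\<in>A. \<Sum>k\<le>K a. w i a k * (t i a k * phi i None a k))"

definition total_cost ::
  "'v set \<Rightarrow> ('v \<times> 'v) set \<Rightarrow> 'a set \<Rightarrow> ('a \<Rightarrow> nat) \<Rightarrow> ('a \<Rightarrow> nat \<Rightarrow> real)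
   \<Rightarrow> ('v \<Rightarrow> 'a \<Rightarrow> nat \<Rightarrow> real) \<Rightarrow> ('v \<Rightarrow> 'v \<Rightarrow> real \<Rightarrow> real) \<Rightarrow> ('v \<Rightarrow> real \<Rightarrow> real)
   \<Rightarrow> ('v \<Rightarrow> 'v option \<Rightarrow> 'a \<Rightarrow> nat \<Rightarrow> real) \<Rightarrow> ('v \<Rightarrow> 'a \<Rightarrow> nat \<Rightarrow> real) \<Rightarrow> real" where
  "total_cost V E A K L w D C phi t =
     (\<Sum>(i, j)\<in>E. D i j (link_flow A K L phi t i j)) + (\<Sum>i\<in>V. C i (comp_load A K w phi t i))"

text \<open>A cost function with effective domain S (value +infinity outside S):
  S is an interval, f is convex and increasing on S, and continuously
  differentiable on S with derivative f'.\<close>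
definition cost_function :: "real set \<Rightarrow> (real \<Rightarrow> real) \<Rightarrow> (real \<Rightarrow> real) \<Rightarrow> bool" where
  "cost_function S f f' \<longleftrightarrow> is_interval S \<and> convex_on S f \<and> mono_on S f
     \<and> (\<forall>x\<in>S. (f has_real_derivative f' x) (at x within S)) \<and> continuous_on S f'"

definition feasible ::
  "'v set \<Rightarrow> ('v \<times> 'v) set \<Rightarrow> 'a set \<Rightarrow> ('a \<Rightarrow> 'v) \<Rightarrow> ('a \<Rightarrow> nat) \<Rightarrow> ('a \<Rightarrow> nat \<Rightarrow> real)
   \<Rightarrow> ('v \<Rightarrow> 'a \<Rightarrow> nat \<Rightarrow> real) \<Rightarrow> ('v \<Rightarrow> 'v \<Rightarrow> real set) \<Rightarrow> ('v \<Rightarrow> real set)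
   \<Rightarrow> ('v \<Rightarrow> 'a \<Rightarrow> real) \<Rightarrow> ('v \<Rightarrow> 'v option \<Rightarrow> 'a \<Rightarrow> nat \<Rightarrow> real)
   \<Rightarrow> ('v \<Rightarrow> 'a \<Rightarrow> nat \<Rightarrow> real) \<Rightarrow> bool" where
  "feasible V E A d K L w Ddom Cdom r phi t \<longleftrightarrow>
     flow_cons V E A d K phi \<and> traffic V A K phi r t
     \<and> (\<forall>(i, j)\<in>E. link_flow A K L phi t i j \<in> Ddom i j)
     \<and> (\<forall>i\<in>V. comp_load A K w phi t i \<in> Cdom i)"

definition utility_function :: "real \<Rightarrow> (real \<Rightarrow> real) \<Rightarrow> (real \<Rightarrow> real) \<Rightarrow> bool" where
  "utility_function rb U U' \<longleftrightarrow> U 0 = 0 \<and> mono_on {0..rb} U \<and> concave_on {0..rb} U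
     \<and> (\<forall>x\<in>{0..rb}. (U has_real_derivative U' x) (at x within {0..rb}))
     \<and> continuous_on {0..rb} U'"

text \<open>p i a k = dT/dt_i(a,k): the marginal cost recursion for strategy phi,
  with Dd i j = D'_ij, Cd i = C'_i.\<close>
definition marginals ::
  "'v set \<Rightarrow> 'a set \<Rightarrow> ('a \<Rightarrow> 'v) \<Rightarrow> ('a \<Rightarrow> nat) \<Rightarrow> ('a \<Rightarrow> nat \<Rightarrow> real)
   \<Rightarrow> ('v \<Rightarrow> 'a \<Rightarrow> nat \<Rightarrow> real) \<Rightarrow> ('v \<Rightarrow> 'v \<Rightarrow> real \<Rightarrow> real) \<Rightarrow> ('v \<Rightarrow> real \<Rightarrow> real)
   \<Rightarrow> ('v \<Rightarrow> 'v option \<Rightarrow> 'a \<Rightarrow> nat \<Rightarrow> real) \<Rightarrow> ('v \<Rightarrow> 'a \<Rightarrow> nat \<Rightarrow> real)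
   \<Rightarrow> ('v \<Rightarrow> 'a \<Rightarrow> nat \<Rightarrow> real) \<Rightarrow> bool" where
  "marginals V A d K L w Dd Cd phi t p \<longleftrightarrow>
     (\<forall>a\<in>A. \<forall>i\<in>V.
        p i a (K a) = (if i = d a then 0 else
           (\<Sum>j\<in>V. phi i (Some j) a (K a)
                    * (L a (K a) * Dd i j (link_flow A K L phi t i j) + p j a (K a))))
      \<and> (\<forall>k<K a. p i a k =
           phi i None a k * (w i a k * Cd i (comp_load A K w phi t i) + p i a (k + 1))
           + (\<Sum>j\<in>V. phi i (Some j) a k
                    * (L a k * Dd i j (link_flow A K L phi t i j) + p j a k))))"

definition delta ::
  "('v \<times> 'v) set \<Rightarrow> 'a set \<Rightarrow> ('a \<Rightarrow> nat) \<Rightarrow> ('a \<Rightarrow> nat \<Rightarrow> real)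
   \<Rightarrow> ('v \<Rightarrow> 'a \<Rightarrow> nat \<Rightarrow> real) \<Rightarrow> ('v \<Rightarrow> 'v \<Rightarrow> real \<Rightarrow> real) \<Rightarrow> ('v \<Rightarrow> real \<Rightarrow> real)
   \<Rightarrow> ('v \<Rightarrow> 'v option \<Rightarrow> 'a \<Rightarrow> nat \<Rightarrow> real) \<Rightarrow> ('v \<Rightarrow> 'a \<Rightarrow> nat \<Rightarrow> real)
   \<Rightarrow> ('v \<Rightarrow> 'a \<Rightarrow> nat \<Rightarrow> real) \<Rightarrow> 'v \<Rightarrow> 'v option \<Rightarrow> 'a \<Rightarrow> nat \<Rightarrow> ereal" where
  "delta E A K L w Dd Cd phi t p i jo a k =
     (case jo of
        Some j \<Rightarrow> (if (i, j) \<in> E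
                   then ereal (L a k * Dd i j (link_flow A K L phi t i j) + p j a k)
                   else \<infinity>)
      | None \<Rightarrow> (if k < K a
                 then ereal (w i a k * Cd i (comp_load A K w phi t i) + p i a (k + 1))
                 else \<infinity>))"

definition cond_SC ::
  "'v set \<Rightarrow> ('v \<times> 'v) set \<Rightarrow> 'a set \<Rightarrow> ('a \<Rightarrow> nat) \<Rightarrow> ('a \<Rightarrow> nat \<Rightarrow> real)
   \<Rightarrow> ('v \<Rightarrow> 'a \<Rightarrow> nat \<Rightarrow> real) \<Rightarrow> ('v \<Rightarrow> 'v \<Rightarrow> real \<Rightarrow> real) \<Rightarrow> ('v \<Rightarrow> real \<Rightarrow> real)
   \<Rightarrow> ('v \<Rightarrow> 'v option \<Rightarrow> 'a \<Rightarrow> nat \<Rightarrow> real) \<Rightarrow> ('v \<Rightarrow> 'a \<Rightarrow> nat \<Rightarrow> real)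
   \<Rightarrow> ('v \<Rightarrow> 'a \<Rightarrow> nat \<Rightarrow> real) \<Rightarrow> bool" where
  "cond_SC V E A K L w Dd Cd phi t p \<longleftrightarrow>
     (\<forall>a\<in>A. \<forall>k\<le>K a. \<forall>i\<in>V. \<forall>jo\<in>insert None (Some ` V).
        let m = Min ((\<lambda>j'. delta E A K L w Dd Cd phi t p i j' a k) ` insert None (Some ` V))
        in (phi i jo a k > 0 \<longrightarrow> delta E A K L w Dd Cd phi t p i jo a k = m)
         \<and> (phi i jo a k = 0 \<longrightarrow> delta E A K L w Dd Cd phi t p i jo a k \<ge> m))"

definition objective ::
  "'v set \<Rightarrow> ('v \<times> 'v) set \<Rightarrow> 'a set \<Rightarrow> ('a \<Rightarrow> nat) \<Rightarrow> ('a \<Rightarrow> nat \<Rightarrow> real)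
   \<Rightarrow> ('v \<Rightarrow> 'a \<Rightarrow> nat \<Rightarrow> real) \<Rightarrow> ('v \<Rightarrow> 'v \<Rightarrow> real \<Rightarrow> real) \<Rightarrow> ('v \<Rightarrow> real \<Rightarrow> real)
   \<Rightarrow> ('v \<Rightarrow> 'a \<Rightarrow> real \<Rightarrow> real)
   \<Rightarrow> ('v \<Rightarrow> 'a \<Rightarrow> real) \<Rightarrow> ('v \<Rightarrow> 'v option \<Rightarrow> 'a \<Rightarrow> nat \<Rightarrow> real)
   \<Rightarrow> ('v \<Rightarrow> 'a \<Rightarrow> nat \<Rightarrow> real) \<Rightarrow> real" where
  "objective V E A K L w D C U r phi t =
     (\<Sum>i\<in>V. \<Sum>a\<in>A. U i a (r i a)) - total_cost V E A K L w D C phi t"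

end

theory Submission
  imports Defs
begin

lemma tangent_ineq:
  fixes f :: "real \<Rightarrow> real"
  assumes convex: "convex_on S f" and iv: "is_interval S"
  assumes c: "c \<in> S" and x : "x \<in> S"
  assumes deriv: "(f has_real_derivative f') (at c within S)"
  shows   "f' * (x - c) \<le> f x - f c"
proof (cases x c rule: linorder_cases)
  assume xc: "x > c"
  let ?A' = "{c<..x}"
  have sub: "{c..x} \<subseteq> S" using iv c x by (metis atLeastAtMost_iff is_interval_1 subsetI)
  have "c \<in> closure ?A'" using xc by simp
  then have "at c within ?A' \<noteq> bot" by (subst at_within_eq_bot_iff) auto
  moreover have "((\<lambda>y. (f y - f c) / (y - c)) \<longlongrightarrow> f') (at c within ?A')"
  proof (rule tendsto_mono[OF at_le])
    show "?A' \<subseteq> S" using sub by auto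
    show "((\<lambda>y. (f y - f c) / (y - c)) \<longlongrightarrow> f') (at c within S)"
      using deriv by (simp add: has_field_derivative_iff)
  qed
  moreover have "eventually (\<lambda>y. (f y - f c) / (y - c) \<le> (f x - f c) / (x - c)) (at c within ?A')"
    unfolding eventually_at_filter
  proof (intro always_eventually allI impI)
    fix y assume "y \<noteq> c" "y \<in> ?A'"
    then have y: "y \<in> {c<..x}" by simp
    with convex have "f y \<le> (f x - f c) / (x - c) * (y - c) + f c"
      using sub by (intro convex_onD_Icc' convex_on_subset[OF convex]) auto
    hence "f y - f c \<le> (f x - f c) / (x - c) * (y - c)" by simp
    thus "(f y - f c) / (y - c) \<le> (f x - f c) / (x - c)" using y xc by (simp add: field_split_simps)
  qed
  ultimately have "f' \<le> (f x - f c) / (x - c)" by (simp add: tendsto_upperbound)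
  thus ?thesis using xc by (simp add: field_simps)
next
  assume xc: "x < c"
  let ?A' = "{x..<c}"
  have sub: "{x..c} \<subseteq> S" using iv c x by (metis atLeastAtMost_iff is_interval_1 subsetI)
  have "c \<in> closure ?A'" using xc by simp
  then have "at c within ?A' \<noteq> bot" by (subst at_within_eq_bot_iff) auto
  moreover have "((\<lambda>y. (f y - f c) / (y - c)) \<longlongrightarrow> f') (at c within ?A')"
  proof (rule tendsto_mono[OF at_le])
    show "?A' \<subseteq> S" using sub by auto
    show "((\<lambda>y. (f y - f c) / (y - c)) \<longlongrightarrow> f') (at c within S)"
      using deriv by (simp add: has_field_derivative_iff)
  qed
  moreover have "eventually (\<lambda>y. (f y - f c) / (y - c) \<ge> (f x - f c) / (x - c)) (at c within ?A')"
    unfolding eventually_at_filter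
  proof (intro always_eventually allI impI)
    fix y assume "y \<noteq> c" "y \<in> ?A'"
    then have y: "y \<in> {x..<c}" by simp
    with convex have "f y \<le> (f x - f c) / (c - x) * (c - y) + f c"
      using sub by (intro convex_onD_Icc'' convex_on_subset[OF convex]) auto
    hence "f y - f c \<le> (f x - f c) * ((c - y) / (c - x))" by simp
    also have "(c - y) / (c - x) = (y - c) / (x - c)" using y xc by (simp add: field_simps)
    finally show "(f y - f c) / (y - c) \<ge> (f x - f c) / (x - c)" using y xc
      by (simp add: field_split_simps)
  qed
  ultimately have "f' \<ge> (f x - f c) / (x - c)" by (simp add: tendsto_lowerbound)
  thus ?thesis using xc by (simp add: field_simps)
qed simp


lemma shift_sum: "(\<Sum>k\<le>(K::nat). if k = 0 then (c::real) else g (k-1)) = c + (\<Sum>k<K. g k)"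
  by (induction K) auto

lemma key:
  assumes finV: "finite V" and finA: "finite A" and EV: "E \<subseteq> V \<times> V"
  and fc: "flow_cons V E A d K ph" and tr: "traffic V A K ph rr tt"
  shows "(\<Sum>(i,j)\<in>E. \<alpha> i j * link_flow A K L ph tt i j) + (\<Sum>i\<in>V. \<beta> i * comp_load A K w ph tt i)
    = (\<Sum>a\<in>A. \<Sum>k\<le>K a. \<Sum>i\<in>V. tt i a k * ((\<Sum>j\<in>V. ph i (Some j) a k * (L a k * \<alpha> i j + p j a k))
                 + ph i None a k * (w i a k * \<beta> i + p i a (k+1))))
      - (\<Sum>a\<in>A. \<Sum>k\<le>K a. \<Sum>i\<in>V. p i a k * tt i a k) + (\<Sum>a\<in>A. \<Sum>i\<in>V. p i a 0 * rr i a)"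
proof -
  have off: "link_flow A K L ph tt i j = 0" if "(i,j) \<in> V \<times> V - E" for i j
    using that fc unfolding link_flow_def flow_cons_def by (auto intro!: sum.neutral)
  have S1: "(\<Sum>(i,j)\<in>E. \<alpha> i j * link_flow A K L ph tt i j)
      = (\<Sum>i\<in>V. \<Sum>j\<in>V. \<alpha> i j * link_flow A K L ph tt i j)"
  proof -
    have "(\<Sum>(i,j)\<in>E. \<alpha> i j * link_flow A K L ph tt i j) = (\<Sum>(i,j)\<in>V\<times>V. \<alpha> i j * link_flow A K L ph tt i j)"
      by (rule sum.mono_neutral_left) (use finV EV off in auto)
    then show ?thesis by (simp add: sum.cartesian_product)
  qed
  have S2: "(\<Sum>i\<in>V. \<Sum>j\<in>V. \<alpha> i j * link_flow A K L ph tt i j)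
     = (\<Sum>a\<in>A. \<Sum>k\<le>K a. \<Sum>i\<in>V. \<Sum>j\<in>V. tt i a k * ph i (Some j) a k * L a k * \<alpha> i j)"
  proof -
    have "(\<Sum>i\<in>V. \<Sum>j\<in>V. \<alpha> i j * link_flow A K L ph tt i j)
       = (\<Sum>i\<in>V. \<Sum>j\<in>V. \<Sum>a\<in>A. \<Sum>k\<le>K a. tt i a k * ph i (Some j) a k * L a k * \<alpha> i j)"
      unfolding link_flow_def by (simp add: sum_distrib_left mult_ac)
    also have "\<dots> = (\<Sum>i\<in>V. \<Sum>a\<in>A. \<Sum>j\<in>V. \<Sum>k\<le>K a. tt i a k * ph i (Some j) a k * L a k * \<alpha> i j)"
      by (rule sum.cong[OF refl], rule sum.swap)
    also have "\<dots> = (\<Sum>i\<in>V. \<Sum>a\<in>A. \<Sum>k\<le>K a. \<Sum>j\<in>V. tt i a k * ph i (Some j) a k * L a k * \<alpha> i j)"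
      by (rule sum.cong[OF refl], rule sum.cong[OF refl], rule sum.swap)
    also have "\<dots> = (\<Sum>a\<in>A. \<Sum>i\<in>V. \<Sum>k\<le>K a. \<Sum>j\<in>V. tt i a k * ph i (Some j) a k * L a k * \<alpha> i j)"
      by (rule sum.swap)
    also have "\<dots> = (\<Sum>a\<in>A. \<Sum>k\<le>K a. \<Sum>i\<in>V. \<Sum>j\<in>V. tt i a k * ph i (Some j) a k * L a k * \<alpha> i j)"
      by (rule sum.cong[OF refl], rule sum.swap)
    finally show ?thesis .
  qed
  have S3: "(\<Sum>i\<in>V. \<beta> i * comp_load A K w ph tt i)
     = (\<Sum>a\<in>A. \<Sum>k\<le>K a. \<Sum>i\<in>V. tt i a k * ph i None a k * w i a k * \<beta> i)"
  proof -
    have "(\<Sum>i\<in>V. \<beta> i * comp_load A K w ph tt i)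
       = (\<Sum>i\<in>V. \<Sum>a\<in>A. \<Sum>k\<le>K a. tt i a k * ph i None a k * w i a k * \<beta> i)"
      unfolding comp_load_def by (simp add: sum_distrib_left mult_ac)
    also have "\<dots> = (\<Sum>a\<in>A. \<Sum>i\<in>V. \<Sum>k\<le>K a. tt i a k * ph i None a k * w i a k * \<beta> i)"
      by (rule sum.swap)
    also have "\<dots> = (\<Sum>a\<in>A. \<Sum>k\<le>K a. \<Sum>i\<in>V. tt i a k * ph i None a k * w i a k * \<beta> i)"
      by (rule sum.cong[OF refl], rule sum.swap)
    finally show ?thesis .
  qed
  have S4: "(\<Sum>k\<le>K a. \<Sum>i\<in>V. p i a k * tt i a k)
     = (\<Sum>k\<le>K a. \<Sum>i\<in>V. \<Sum>j\<in>V. tt i a k * ph i (Some j) a k * p j a k)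
       + (\<Sum>k\<le>K a. \<Sum>i\<in>V. tt i a k * ph i None a k * p i a (k+1))
       + (\<Sum>i\<in>V. p i a 0 * rr i a)" if a: "a \<in> A" for a
  proof -
    define X where "X k i = (\<Sum>j\<in>V. tt j a k * ph j (Some i) a k)" for k i
    define Y where "Y k = (\<Sum>i\<in>V. p i a (k+1) * (tt i a k * ph i None a k))" for k
    have teq: "tt i a k = X k i + (if k = 0 then rr i a else tt i a (k-1) * ph i None a (k-1))"
      if "i \<in> V" "k \<le> K a" for i k
      using tr a that unfolding traffic_def X_def by (cases k) auto
    have "(\<Sum>k\<le>K a. \<Sum>i\<in>V. p i a k * tt i a k)
        = (\<Sum>k\<le>K a. \<Sum>i\<in>V. p i a k * X k i + (if k = 0 then p i a 0 * rr i a else p i a k * (tt i a (k-1) * ph i None a (k-1))))"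
      by (intro sum.cong refl) (simp add: teq distrib_left)
    also have "\<dots> = (\<Sum>k\<le>K a. \<Sum>i\<in>V. p i a k * X k i) + (\<Sum>k\<le>K a. if k = 0 then (\<Sum>i\<in>V. p i a 0 * rr i a) else Y (k-1))"
      by (simp add: sum.distrib, intro sum.cong refl, auto simp: Y_def)
    also have "\<dots> = (\<Sum>k\<le>K a. \<Sum>i\<in>V. p i a k * X k i) + (\<Sum>i\<in>V. p i a 0 * rr i a) + (\<Sum>k<K a. Y k)"
      by (simp add: shift_sum)
    also have "(\<Sum>k<K a. Y k) = (\<Sum>k\<le>K a. Y k)"
    proof -
      have z: "\<And>i. i \<in> V \<Longrightarrow> ph i None a (K a) = 0"
        using fc a unfolding flow_cons_def by (metis le_refl)
      have "Y (K a) = 0" unfolding Y_def by (simp add: z)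
      then show ?thesis by (simp add: lessThan_Suc_atMost[symmetric])
    qed
    also have "(\<Sum>k\<le>K a. \<Sum>i\<in>V. p i a k * X k i) = (\<Sum>k\<le>K a. \<Sum>i\<in>V. \<Sum>j\<in>V. tt i a k * ph i (Some j) a k * p j a k)"
    proof (rule sum.cong[OF refl])
      fix k
      have "(\<Sum>i\<in>V. p i a k * X k i) = (\<Sum>i\<in>V. \<Sum>j\<in>V. tt j a k * ph j (Some i) a k * p i a k)"
        unfolding X_def by (simp add: sum_distrib_left mult_ac)
      also have "\<dots> = (\<Sum>i\<in>V. \<Sum>j\<in>V. tt i a k * ph i (Some j) a k * p j a k)"
        by (rule sum.swap)
      finally show "(\<Sum>i\<in>V. p i a k * X k i) = (\<Sum>i\<in>V. \<Sum>j\<in>V. tt i a k * ph i (Some j) a k * p j a k)" .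
    qed
    finally show ?thesis unfolding Y_def by (simp add: mult_ac)
  qed
  have S5: "(\<Sum>a\<in>A. \<Sum>k\<le>K a. \<Sum>i\<in>V. tt i a k * ((\<Sum>j\<in>V. ph i (Some j) a k * (L a k * \<alpha> i j + p j a k))
                 + ph i None a k * (w i a k * \<beta> i + p i a (k+1))))
     = (\<Sum>a\<in>A. \<Sum>k\<le>K a. \<Sum>i\<in>V. \<Sum>j\<in>V. tt i a k * ph i (Some j) a k * L a k * \<alpha> i j)
     + (\<Sum>a\<in>A. \<Sum>k\<le>K a. \<Sum>i\<in>V. tt i a k * ph i None a k * w i a k * \<beta> i)
     + (\<Sum>a\<in>A. (\<Sum>k\<le>K a. \<Sum>i\<in>V. \<Sum>j\<in>V. tt i a k * ph i (Some j) a k * p j a k)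
       + (\<Sum>k\<le>K a. \<Sum>i\<in>V. tt i a k * ph i None a k * p i a (k+1)))"
    by (simp add: sum.distrib[symmetric] sum_distrib_left distrib_left mult_ac, intro sum.cong refl, simp add: sum.distrib)
  show ?thesis
    using S1 S2 S3 S5 S4 by (simp add: sum.distrib)
qed


lemma Bge:
  assumes fc: "flow_cons V E A d K phi" and fc': "flow_cons V E A d K phi'"
    and marg: "marginals V A d K L w Dd Cd phi t p" and SC: "cond_SC V E A K L w Dd Cd phi t p"
    and finV: "finite V" and a: "a \<in> A" and k: "k \<le> K a" and i: "i \<in> V"
  defines "dl j \<equiv> L a k * Dd i j (link_flow A K L phi t i j) + p j a k"
      and "dc \<equiv> w i a k * Cd i (comp_load A K w phi t i) + p i a (k+1)"
  shows "p i a k \<le> (\<Sum>j\<in>V. phi' i (Some j) a k * dl j) + phi' i None a k * dc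
     \<and> (\<Sum>j\<in>V. phi i (Some j) a k * dl j) + phi i None a k * dc = p i a k"
proof -
  let ?J = "insert None (Some ` V)"
  let ?dt = "\<lambda>jo. delta E A K L w Dd Cd phi t p i jo a k"
  define m where "m = Min (?dt ` ?J)"
  have finJ: "finite ?J" using finV by simp
  have SCi: "(phi i jo a k > 0 \<longrightarrow> ?dt jo = m) \<and> (phi i jo a k = 0 \<longrightarrow> ?dt jo \<ge> m)"
    if "jo \<in> ?J" for jo
    using SC a k i that unfolding cond_SC_def m_def Let_def by blast
  have mle: "m \<le> ?dt jo" if "jo \<in> ?J" for jo
    unfolding m_def using finJ that by (intro Min_le) auto
  have dtS: "?dt (Some j) = ereal (dl j)" if "(i,j) \<in> E" for j
    using that unfolding delta_def dl_def by simp
  have dtN: "?dt None = ereal dc" if "k < K a"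
    using that unfolding delta_def dc_def by simp
  have fcI: "\<And>ph. flow_cons V E A d K ph \<Longrightarrow>
      (\<forall>j\<in>V. 0 \<le> ph i (Some j) a k \<and> ((i, j) \<notin> E \<longrightarrow> ph i (Some j) a k = 0))
      \<and> 0 \<le> ph i None a k \<and> (k = K a \<longrightarrow> ph i None a k = 0)
      \<and> ph i None a k + (\<Sum>j\<in>V. ph i (Some j) a k) = (if k = K a \<and> i = d a then 0 else 1)"
    using a k i unfolding flow_cons_def by blast
  note f = fcI[OF fc] and f' = fcI[OF fc']
  have z2: "phi i None a k = 0 \<and> (\<forall>j\<in>V. phi i (Some j) a k = 0)" if True: "k = K a \<and> i = d a"
  proof -
      have s: "phi i None a k + (\<Sum>j\<in>V. phi i (Some j) a k) = 0" using f True by simp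
      have "(\<Sum>j\<in>V. phi i (Some j) a k) \<ge> 0" using f by (intro sum_nonneg) auto
      then have "phi i None a k = 0" "(\<Sum>j\<in>V. phi i (Some j) a k) = 0" using s f by linarith+
      then show ?thesis using f finV sum_nonneg_eq_0_iff by (metis (no_types, lifting))
  qed
  have pK: "p i a k = (\<Sum>j\<in>V. phi i (Some j) a k * dl j) + phi i None a k * dc"
  proof (cases "k = K a")
    case True
    then have "phi i None a k = 0" using f by blast
    show ?thesis
    proof (cases "i = d a")
      case True2: True
      then show ?thesis using z2 True marg a i unfolding marginals_def by simp
    next
      case False
      then show ?thesis using marg a i True \<open>phi i None a k = 0\<close> unfolding marginals_def dl_def by simp
    qed
  next
    case False
    then have "k < K a" using k by simp
    then show ?thesis using marg a i unfolding marginals_def dl_def dc_def by (simp add: algebra_simps)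
  qed
  show ?thesis
  proof (cases "k = K a \<and> i = d a")
    case True
    have z: "phi' i None a k = 0 \<and> (\<forall>j\<in>V. phi' i (Some j) a k = 0)"
    proof -
      have s: "phi' i None a k + (\<Sum>j\<in>V. phi' i (Some j) a k) = 0" using f' True by simp
      have "(\<Sum>j\<in>V. phi' i (Some j) a k) \<ge> 0" using f' by (intro sum_nonneg) auto
      then have "phi' i None a k = 0" "(\<Sum>j\<in>V. phi' i (Some j) a k) = 0" using s f' by linarith+
      then show ?thesis using f' finV sum_nonneg_eq_0_iff by (metis (no_types, lifting))
    qed
    note z2 = z2[OF True]
    have "p i a k = 0" using pK z2 by simp
    then show ?thesis using z z2 by simp
  next
    case False
    then have s1: "phi i None a k + (\<Sum>j\<in>V. phi i (Some j) a k) = 1"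
      and s1': "phi' i None a k + (\<Sum>j\<in>V. phi' i (Some j) a k) = 1" using f f' by auto
    obtain \<mu> where m\<mu>: "m = ereal \<mu>"
    proof (cases "phi i None a k > 0")
      case True
      then have "k \<noteq> K a" using f by auto
      then have "k < K a" using k by simp
      then show ?thesis using that SCi[of None] True dtN by auto
    next
      case False
      then have "phi i None a k = 0" using f by simp
      then have "(\<Sum>j\<in>V. phi i (Some j) a k) = 1" using s1 by simp
      then obtain j where j: "j \<in> V" "phi i (Some j) a k \<noteq> 0"
        by (metis (no_types, lifting) sum.neutral zero_neq_one)
      then have jp: "phi i (Some j) a k > 0" using f by force
      then have "(i,j) \<in> E" using f j by force
      then show ?thesis using that SCi[of "Some j"] jp dtS j by auto
    qed
    have eqS: "phi i (Some j) a k * dl j = phi i (Some j) a k * \<mu>" if "j \<in> V" for j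
    proof (cases "phi i (Some j) a k > 0")
      case True
      then have "(i,j) \<in> E" using f that by force
      then show ?thesis using SCi[of "Some j"] True dtS that m\<mu> by auto
    qed (use f that in force)
    have eqN: "phi i None a k * dc = phi i None a k * \<mu>"
    proof (cases "phi i None a k > 0")
      case True
      then have "k < K a" using f k by (cases "k = K a") auto
      then show ?thesis using SCi[of None] True dtN m\<mu> by auto
    qed (use f in force)
    have geS: "phi' i (Some j) a k * dl j \<ge> phi' i (Some j) a k * \<mu>" if "j \<in> V" for j
    proof (cases "phi' i (Some j) a k > 0")
      case True
      then have "(i,j) \<in> E" using f' that by force
      then have "dl j \<ge> \<mu>" using mle[of "Some j"] dtS that m\<mu> by auto
      then show ?thesis using True by (simp add: mult_left_mono)
    qed (use f' that in force)
    have geN: "phi' i None a k * dc \<ge> phi' i None a k * \<mu>"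
    proof (cases "phi' i None a k > 0")
      case True
      then have "k < K a" using f' k by (cases "k = K a") auto
      then have "dc \<ge> \<mu>" using mle[of None] dtN m\<mu> by auto
      then show ?thesis using True by (simp add: mult_left_mono)
    qed (use f' in force)
    have B: "(\<Sum>j\<in>V. phi i (Some j) a k * dl j) + phi i None a k * dc = \<mu>"
    proof -
      have "(\<Sum>j\<in>V. phi i (Some j) a k * dl j) + phi i None a k * dc
          = (\<Sum>j\<in>V. phi i (Some j) a k) * \<mu> + phi i None a k * \<mu>"
        using eqN by (simp add: sum_distrib_right sum.cong[OF refl eqS])
      also have "\<dots> = (phi i None a k + (\<Sum>j\<in>V. phi i (Some j) a k)) * \<mu>" by (simp add: algebra_simps)
      also have "\<dots> = \<mu>" using s1 by simp
      finally show ?thesis .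
    qed
    have B': "(\<Sum>j\<in>V. phi' i (Some j) a k * dl j) + phi' i None a k * dc \<ge> \<mu>"
    proof -
      have "(\<Sum>j\<in>V. phi' i (Some j) a k * dl j) + phi' i None a k * dc
          \<ge> (\<Sum>j\<in>V. phi' i (Some j) a k * \<mu>) + phi' i None a k * \<mu>"
        using geS geN by (intro add_mono sum_mono) auto
      moreover have "(\<Sum>j\<in>V. phi' i (Some j) a k * \<mu>) + phi' i None a k * \<mu> = \<mu>"
      proof -
        have "(\<Sum>j\<in>V. phi' i (Some j) a k * \<mu>) + phi' i None a k * \<mu> = (phi' i None a k + (\<Sum>j\<in>V. phi' i (Some j) a k)) * \<mu>"
          by (simp add: sum_distrib_right sum_distrib_left algebra_simps)
        then show ?thesis using s1' by simp
      qed
      ultimately show ?thesis by simp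
    qed
    show ?thesis using B B' pK by simp
  qed
qed


lemma comb:
  fixes u' u P' P a' a d' dd b' b c' c :: real
  assumes "u' - u \<le> P' - P" "a' - a \<le> d' - dd" "b' - b \<le> c' - c" "a + b = P" "a' + b' \<ge> P'"
  shows "u' - (d' + c') \<le> u - (dd + c)"
  using assms by linarith

theorem theorem5:
  fixes V :: "'v set" and E :: "('v \<times> 'v) set" and A :: "'a set"
    and d :: "'a \<Rightarrow> 'v" and K :: "'a \<Rightarrow> nat"
    and L :: "'a \<Rightarrow> nat \<Rightarrow> real" and w :: "'v \<Rightarrow> 'a \<Rightarrow> nat \<Rightarrow> real"
    and D Dd :: "'v \<Rightarrow> 'v \<Rightarrow> real \<Rightarrow> real" and Ddom :: "'v \<Rightarrow> 'v \<Rightarrow> real set"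
    and C Cd :: "'v \<Rightarrow> real \<Rightarrow> real" and Cdom :: "'v \<Rightarrow> real set"
    and rbar :: "'v \<Rightarrow> 'a \<Rightarrow> real" and U U' :: "'v \<Rightarrow> 'a \<Rightarrow> real \<Rightarrow> real"
    and r :: "'v \<Rightarrow> 'a \<Rightarrow> real" and phi :: "'v \<Rightarrow> 'v option \<Rightarrow> 'a \<Rightarrow> nat \<Rightarrow> real"
    and t :: "'v \<Rightarrow> 'a \<Rightarrow> nat \<Rightarrow> real"
    and phiV phiR :: "'v \<Rightarrow> 'a \<Rightarrow> real"
    and p :: "'v \<Rightarrow> 'a \<Rightarrow> nat \<Rightarrow> real"
  assumes graph: "graph_ok V E"
    and finA: "finite A"
    and dest: "\<forall>a\<in>A. d a \<in> V"
    and Lpos: "\<forall>a\<in>A. \<forall>k\<le>K a. L a k > 0"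
    and wpos: "\<forall>i\<in>V. \<forall>a\<in>A. \<forall>k\<le>K a. w i a k > 0"
    and Dcost: "\<forall>(i, j)\<in>E. cost_function (Ddom i j) (D i j) (Dd i j)"
    and Ccost: "\<forall>i\<in>V. cost_function (Cdom i) (C i) (Cd i)"
    and rbar_nonneg: "\<forall>i\<in>V. \<forall>a\<in>A. rbar i a \<ge> 0"
    and util: "\<forall>i\<in>V. \<forall>a\<in>A. utility_function (rbar i a) (U i a) (U' i a)"
    and adm: "\<forall>i\<in>V. \<forall>a\<in>A. phiV i a \<ge> 0 \<and> phiR i a \<ge> 0 \<and> phiV i a + phiR i a = 1
                              \<and> r i a = phiV i a * rbar i a"
    and feas: "feasible V E A d K L w Ddom Cdom r phi t"
    and marg: "marginals V A d K L w Dd Cd phi t p"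
    and SC: "cond_SC V E A K L w Dd Cd phi t p"
    and admit_cond: "\<forall>i\<in>V. \<forall>a\<in>A. phiV i a > 0 \<longrightarrow> p i a 0 \<le> U' i a (r i a)"
    and reject_cond: "\<forall>i\<in>V. \<forall>a\<in>A. phiR i a > 0 \<longrightarrow> p i a 0 \<ge> U' i a (r i a)"
  shows "\<forall>r' phi' t'.
           (\<forall>i\<in>V. \<forall>a\<in>A. 0 \<le> r' i a \<and> r' i a \<le> rbar i a)
           \<and> feasible V E A d K L w Ddom Cdom r' phi' t'
           \<longrightarrow> objective V E A K L w D C U r' phi' t' \<le> objective V E A K L w D C U r phi t"
  proof (intro allI impI)
  fix r' phi' t'
  assume H: "(\<forall>i\<in>V. \<forall>a\<in>A. 0 \<le> r' i a \<and> r' i a \<le> rbar i a)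
           \<and> feasible V E A d K L w Ddom Cdom r' phi' t'"
  then have bnd: "\<forall>i\<in>V. \<forall>a\<in>A. 0 \<le> r' i a \<and> r' i a \<le> rbar i a"
    and feas': "feasible V E A d K L w Ddom Cdom r' phi' t'" by blast+
  have G: "finite V \<and> E \<subseteq> V \<times> V \<and> (\<forall>i j. (i, j) \<in> E \<longrightarrow> (j, i) \<in> E)
     \<and> (\<forall>i\<in>V. \<forall>j\<in>V. (i, j) \<in> E\<^sup>*)" using graph unfolding graph_ok_def .
  have finV: "finite V" using G by blast
  have EV: "E \<subseteq> V \<times> V" using G by blast
  have fc: "flow_cons V E A d K phi" and tr: "traffic V A K phi r t"
    and Fin: "\<forall>(i, j)\<in>E. link_flow A K L phi t i j \<in> Ddom i j"
    and Gin: "\<forall>i\<in>V. comp_load A K w phi t i \<in> Cdom i"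
    using feas unfolding feasible_def by blast+
  have fc': "flow_cons V E A d K phi'" and tr': "traffic V A K phi' r' t'"
    and Fin': "\<forall>(i, j)\<in>E. link_flow A K L phi' t' i j \<in> Ddom i j"
    and Gin': "\<forall>i\<in>V. comp_load A K w phi' t' i \<in> Cdom i"
    using feas' unfolding feasible_def by blast+
  define \<alpha> where "\<alpha> i j = Dd i j (link_flow A K L phi t i j)" for i j
  define \<beta> where "\<beta> i = Cd i (comp_load A K w phi t i)" for i
  define B where "B ph i a k = (\<Sum>j\<in>V. ph i (Some j) a k * (L a k * \<alpha> i j + p j a k))
                 + ph i None a k * (w i a k * \<beta> i + p i a (k+1))" for ph i a k
  have Bg: "p i a k \<le> B phi' i a k \<and> B phi i a k = p i a k" if "a \<in> A" "k \<le> K a" "i \<in> V" for i a k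
    unfolding B_def \<alpha>_def \<beta>_def by (rule Bge[OF fc fc' marg SC finV that])
  note K1 = key[OF finV finA EV fc tr, of \<alpha> L \<beta> w p]
  note K2 = key[OF finV finA EV fc' tr', of \<alpha> L \<beta> w p]
  have tnn: "0 \<le> tt i a k" if "traffic V A K ph rr tt" "a \<in> A" "i \<in> V" "k \<le> K a" for ph rr tt i a k
    using that unfolding traffic_def by auto
  have E1: "(\<Sum>a\<in>A. \<Sum>k\<le>K a. \<Sum>i\<in>V. t i a k * B phi i a k) = (\<Sum>a\<in>A. \<Sum>k\<le>K a. \<Sum>i\<in>V. p i a k * t i a k)"
    by (intro sum.cong refl) (simp add: Bg mult.commute)
  have E2: "(\<Sum>a\<in>A. \<Sum>k\<le>K a. \<Sum>i\<in>V. t' i a k * B phi' i a k) \<ge> (\<Sum>a\<in>A. \<Sum>k\<le>K a. \<Sum>i\<in>V. p i a k * t' i a k)"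
  proof -
    have "p i a k * t' i a k \<le> t' i a k * B phi' i a k" if "a \<in> A" "k \<le> K a" "i \<in> V" for a k i
      using Bg[OF that] tnn[OF tr' that(1) that(3) that(2)] by (metis mult.commute mult_left_mono)
    then show ?thesis by (intro sum_mono) auto
  qed
  define LF where "LF ph tt = (\<Sum>(i,j)\<in>E. \<alpha> i j * link_flow A K L ph tt i j) + (\<Sum>i\<in>V. \<beta> i * comp_load A K w ph tt i)" for ph tt
  have L1: "LF phi t = (\<Sum>a\<in>A. \<Sum>i\<in>V. p i a 0 * r i a)"
    unfolding LF_def using K1 E1[unfolded B_def] by linarith
  have L2: "LF phi' t' \<ge> (\<Sum>a\<in>A. \<Sum>i\<in>V. p i a 0 * r' i a)"
    unfolding LF_def using K2 E2[unfolded B_def] by linarith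
  have cD: "\<alpha> i j * link_flow A K L phi' t' i j - \<alpha> i j * link_flow A K L phi t i j
       \<le> D i j (link_flow A K L phi' t' i j) - D i j (link_flow A K L phi t i j)" if "(i,j) \<in> E" for i j
  proof -
    have cf: "cost_function (Ddom i j) (D i j) (Dd i j)" using bspec[OF Dcost that] by simp
    have "Dd i j (link_flow A K L phi t i j) * (link_flow A K L phi' t' i j - link_flow A K L phi t i j)
        \<le> D i j (link_flow A K L phi' t' i j) - D i j (link_flow A K L phi t i j)"
    proof (rule tangent_ineq)
      show "convex_on (Ddom i j) (D i j)" "is_interval (Ddom i j)" using cf unfolding cost_function_def by simp_all
      show m1: "link_flow A K L phi t i j \<in> Ddom i j" using bspec[OF Fin that] by simp
      show "link_flow A K L phi' t' i j \<in> Ddom i j" using bspec[OF Fin' that] by simp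
      have "\<forall>x\<in>Ddom i j. (D i j has_real_derivative Dd i j x) (at x within Ddom i j)"
        using cf unfolding cost_function_def by simp
      then show "(D i j has_real_derivative Dd i j (link_flow A K L phi t i j)) (at (link_flow A K L phi t i j) within Ddom i j)"
        using m1 by blast
    qed
    then show ?thesis unfolding \<alpha>_def by (simp add: right_diff_distrib)
  qed
  have cC: "\<beta> i * comp_load A K w phi' t' i - \<beta> i * comp_load A K w phi t i
       \<le> C i (comp_load A K w phi' t' i) - C i (comp_load A K w phi t i)" if "i \<in> V" for i
  proof -
    have cf: "cost_function (Cdom i) (C i) (Cd i)" using bspec[OF Ccost that] by simp
    have "Cd i (comp_load A K w phi t i) * (comp_load A K w phi' t' i - comp_load A K w phi t i)
        \<le> C i (comp_load A K w phi' t' i) - C i (comp_load A K w phi t i)"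
    proof (rule tangent_ineq)
      show "convex_on (Cdom i) (C i)" "is_interval (Cdom i)" using cf unfolding cost_function_def by simp_all
      show m1: "comp_load A K w phi t i \<in> Cdom i" using bspec[OF Gin that] by simp
      show "comp_load A K w phi' t' i \<in> Cdom i" using bspec[OF Gin' that] by simp
      have "\<forall>x\<in>Cdom i. (C i has_real_derivative Cd i x) (at x within Cdom i)"
        using cf unfolding cost_function_def by simp
      then show "(C i has_real_derivative Cd i (comp_load A K w phi t i)) (at (comp_load A K w phi t i) within Cdom i)"
        using m1 by blast
    qed
    then show ?thesis unfolding \<beta>_def by (simp add: right_diff_distrib)
  qed
  have sD: "(\<Sum>(i,j)\<in>E. \<alpha> i j * link_flow A K L phi' t' i j) - (\<Sum>(i,j)\<in>E. \<alpha> i j * link_flow A K L phi t i j)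
      \<le> (\<Sum>(i,j)\<in>E. D i j (link_flow A K L phi' t' i j)) - (\<Sum>(i,j)\<in>E. D i j (link_flow A K L phi t i j))"
  proof -
    have "(\<Sum>(i,j)\<in>E. \<alpha> i j * link_flow A K L phi' t' i j - \<alpha> i j * link_flow A K L phi t i j)
      \<le> (\<Sum>(i,j)\<in>E. D i j (link_flow A K L phi' t' i j) - D i j (link_flow A K L phi t i j))"
      using cD by (intro sum_mono) auto
    then show ?thesis by (simp add: case_prod_beta sum_subtractf)
  qed
  have sC: "(\<Sum>i\<in>V. \<beta> i * comp_load A K w phi' t' i) - (\<Sum>i\<in>V. \<beta> i * comp_load A K w phi t i)
      \<le> (\<Sum>i\<in>V. C i (comp_load A K w phi' t' i)) - (\<Sum>i\<in>V. C i (comp_load A K w phi t i))"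
  proof -
    have "(\<Sum>i\<in>V. \<beta> i * comp_load A K w phi' t' i - \<beta> i * comp_load A K w phi t i)
      \<le> (\<Sum>i\<in>V. C i (comp_load A K w phi' t' i) - C i (comp_load A K w phi t i))"
      using cC by (intro sum_mono) auto
    then show ?thesis by (simp add: sum_subtractf)
  qed
  have uI: "U i a (r' i a) - U i a (r i a) \<le> p i a 0 * (r' i a - r i a)" if i: "i \<in> V" and a: "a \<in> A" for i a
  proof -
    have uf: "utility_function (rbar i a) (U i a) (U' i a)" using util i a by auto
    have ad: "phiV i a \<ge> 0" "phiR i a \<ge> 0" "phiV i a + phiR i a = 1" "r i a = phiV i a * rbar i a"
      using adm i a by auto
    have rb: "rbar i a \<ge> 0" using rbar_nonneg i a by auto
    have "phiV i a \<le> 1" using ad by linarith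
    then have rin: "r i a \<in> {0..rbar i a}" using ad rb by (simp add: mult_left_le_one_le)
    have r'in: "r' i a \<in> {0..rbar i a}" using bnd i a by auto
    have "- U' i a (r i a) * (r' i a - r i a) \<le> - U i a (r' i a) - - U i a (r i a)"
    proof (rule tangent_ineq[of "{0..rbar i a}" "\<lambda>x. - U i a x"])
      show "convex_on {0..rbar i a} (\<lambda>x. - U i a x)" using uf unfolding utility_function_def concave_on_def by auto
      show "is_interval {0..rbar i a}" by (rule is_interval_cc)
      show "r i a \<in> {0..rbar i a}" "r' i a \<in> {0..rbar i a}" using rin r'in by auto
      show "((\<lambda>x. - U i a x) has_real_derivative - U' i a (r i a)) (at (r i a) within {0..rbar i a})"
        using uf rin unfolding utility_function_def by (auto intro!: DERIV_minus)
    qed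
    then have tg: "U i a (r' i a) - U i a (r i a) \<le> U' i a (r i a) * (r' i a - r i a)" by simp
    have "U' i a (r i a) * (r' i a - r i a) \<le> p i a 0 * (r' i a - r i a)"
    proof (cases "r' i a > r i a")
      case True
      then have "r i a < rbar i a" using r'in by auto
      then have "phiV i a \<noteq> 1" using ad by auto
      then have "phiR i a > 0" using ad by auto
      then have "p i a 0 \<ge> U' i a (r i a)" using reject_cond i a by auto
      then show ?thesis using True by (intro mult_right_mono) auto
    next
      case False
      show ?thesis
      proof (cases "r' i a < r i a")
        case True
        then have "r i a > 0" using r'in by auto
        then have "phiV i a \<noteq> 0" using ad by auto
        then have "phiV i a > 0" using ad by auto
        then have "p i a 0 \<le> U' i a (r i a)" using admit_cond i a by auto
        then show ?thesis using True by (intro mult_right_mono_neg) auto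
      qed (use False in auto)
    qed
    then show ?thesis using tg by linarith
  qed
  have sU: "(\<Sum>i\<in>V. \<Sum>a\<in>A. U i a (r' i a)) - (\<Sum>i\<in>V. \<Sum>a\<in>A. U i a (r i a))
      \<le> (\<Sum>a\<in>A. \<Sum>i\<in>V. p i a 0 * r' i a) - (\<Sum>a\<in>A. \<Sum>i\<in>V. p i a 0 * r i a)"
  proof -
    have "(\<Sum>i\<in>V. \<Sum>a\<in>A. U i a (r' i a) - U i a (r i a)) \<le> (\<Sum>i\<in>V. \<Sum>a\<in>A. p i a 0 * (r' i a - r i a))"
      using uI by (intro sum_mono) auto
    moreover have "(\<Sum>i\<in>V. \<Sum>a\<in>A. p i a 0 * (r' i a - r i a))
        = (\<Sum>a\<in>A. \<Sum>i\<in>V. p i a 0 * r' i a) - (\<Sum>a\<in>A. \<Sum>i\<in>V. p i a 0 * r i a)"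
    proof -
      have "(\<Sum>i\<in>V. \<Sum>a\<in>A. p i a 0 * (r' i a - r i a))
          = (\<Sum>i\<in>V. \<Sum>a\<in>A. p i a 0 * r' i a) - (\<Sum>i\<in>V. \<Sum>a\<in>A. p i a 0 * r i a)"
        by (simp add: right_diff_distrib sum_subtractf)
      moreover have "(\<Sum>i\<in>V. \<Sum>a\<in>A. p i a 0 * r' i a) = (\<Sum>a\<in>A. \<Sum>i\<in>V. p i a 0 * r' i a)"
        by (rule sum.swap)
      moreover have "(\<Sum>i\<in>V. \<Sum>a\<in>A. p i a 0 * r i a) = (\<Sum>a\<in>A. \<Sum>i\<in>V. p i a 0 * r i a)"
        by (rule sum.swap)
      ultimately show ?thesis by simp
    qed
    ultimately show ?thesis by (simp add: sum_subtractf)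
  qed
  show "objective V E A K L w D C U r' phi' t' \<le> objective V E A K L w D C U r phi t"
    unfolding objective_def total_cost_def
    by (rule comb[OF sU sD sC L1[unfolded LF_def] L2[unfolded LF_def]])
qed

end
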